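(* Let $r \ge 1$ and $s \le r$. For $1 \le j \le r$ and $d \ge 0$, let $e^d_{r,j}$ be the elementary symmetric polynomial of degree $d$ in the $r-1$ variables $x_1,\dots,x_r$ with $x_j$ omitted. Let $A_r^s(x_1,\dots,x_r)$ be the $s \times r$ matrix whose $(d+1, j)$ entry is $e^d_{r,j}$ for $0 \le d \le s-1$, $1 \le j \le r$. For $1 \le i_1 < i_2 < \cdots < i_s \le r$, let $B_{i_1,\dots,i_s}$ be the $s \times s$ submatrix of $A_r^s$ consisting of columns $i_1,\dots,i_s$. Then, as polynomials in $x_1,\dots,x_r$, \[ \det B_{i_1,\dots,i_s}(x_1,\dots,x_r) = \prod_{1 \le \alpha < \beta \le s} (x_{i_\alpha} - x_{i_\beta}). \] *)

theory Defs
  imports "Jordan_Normal_Form.Determinant"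
begin

definition esym_omit :: "nat \<Rightarrow> nat \<Rightarrow> nat \<Rightarrow> (nat \<Rightarrow> 'a::comm_ring_1) \<Rightarrow> 'a" where
  "esym_omit r j d x = (\<Sum>S\<in>{S. S \<subseteq> {1..r} - {j} \<and> card S = d}. \<Prod>i\<in>S. x i)"

text \<open>The s x r matrix A_r^s: entry in row d+1, column j is e^d_{r,j} (0-based storage).\<close>
definition A_mat :: "nat \<Rightarrow> nat \<Rightarrow> (nat \<Rightarrow> 'a::comm_ring_1) \<Rightarrow> 'a mat" where
  "A_mat r s x = mat s r (\<lambda>(a, b). esym_omit r (b + 1) a x)"

definition B_mat :: "nat \<Rightarrow> nat \<Rightarrow> (nat \<Rightarrow> nat) \<Rightarrow> (nat \<Rightarrow> 'a::comm_ring_1) \<Rightarrow> 'a mat" where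
  "B_mat r s i x = mat s s (\<lambda>(a, b). A_mat r s x $$ (a, i (b + 1) - 1))"

end

theory Submission
  imports Defs
begin

lemma mult_mat_entry:
  assumes "a < n" "b < k"
  shows "(mat n m f * mat m k g) $$ (a,b) = (\<Sum>c<m. f(a,c) * g(c,b))"
  using assms by (simp add: scalar_prod_def atLeast0LessThan)

lemma det_tri:
  assumes "\<And>a b. a < b \<Longrightarrow> b < n \<Longrightarrow> f (a,b) = 0"
  shows "det (mat n n f) = (\<Prod>a<n. f (a,a))"
proof -
  have "det (mat n n f) = prod_list (diag_mat (mat n n f))"
    by (rule det_lower_triangular[of n]) (use assms in auto)
  also have "\<dots> = (\<Prod>a<n. f (a,a))"
    by (simp add: diag_mat_def prod.list_conv_set_nth atLeast0LessThan[symmetric])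
  finally show ?thesis .
qed

lemma vdm_step:
  fixes y :: "nat \<Rightarrow> 'a::comm_ring_1"
  shows "det (mat (Suc n) (Suc n) (\<lambda>(a,b). y b ^ a)) =
    (\<Prod>b<n. (y (Suc b) - y 0)) * det (mat n n (\<lambda>(a,b). y (Suc b) ^ a))"
proof -
  define V where "V = mat (Suc n) (Suc n) (\<lambda>(a,b). y b ^ a)"
  define E :: "'a mat" where "E = mat (Suc n) (Suc n) (\<lambda>(a,b). if a = b then 1 else if a = Suc b then - y 0 else 0)"
  define M :: "'a mat" where "M = mat (Suc n) (Suc n) (\<lambda>(a,b). if a = 0 then 1 else y b ^ (a-1) * (y b - y 0))"
  have detE: "det E = 1" unfolding E_def by (subst det_tri) auto
  have EV: "E * V = M"
  proof (rule eq_matI)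
    fix a b assume ab: "a < dim_row M" "b < dim_col M"
    hence ab': "a < Suc n" "b < Suc n" by (auto simp: M_def)
    have "(E * V) $$ (a,b) = (\<Sum>c<Suc n. (if a = c then 1 else if a = Suc c then - y 0 else 0) * y b ^ c)"
      unfolding E_def V_def by (subst mult_mat_entry) (use ab' in auto)
    also have "\<dots> = (\<Sum>c<Suc n. (if c = a then y b ^ c else 0) + (if Suc c = a then - y 0 * y b ^ c else 0))"
      by (rule sum.cong) auto
    also have "\<dots> = M $$ (a,b)"
    proof (cases a)
      case 0 then show ?thesis using ab' by (simp add: sum.distrib M_def)
    next
      case (Suc a')
      have "(\<Sum>c<Suc n. (if Suc c = a then - y 0 * y b ^ c else 0)) = (\<Sum>c<Suc n. (if c = a' then - y 0 * y b ^ c else 0))"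
        using Suc by (intro sum.cong) auto
      then show ?thesis using ab' Suc by (simp add: sum.distrib M_def algebra_simps) (metis Suc_lessI power_Suc)
    qed
    finally show "(E * V) $$ (a,b) = M $$ (a,b)" .
  qed (auto simp: E_def M_def V_def)
  have "det M = det E * det V"
    unfolding EV[symmetric] by (rule det_mult) (auto simp: E_def V_def)
  hence detM: "det M = det V" using detE by simp
  have MC: "M \<in> carrier_mat (Suc n) (Suc n)" by (simp add: M_def)
  have "det M = (\<Sum>a<Suc n. M $$ (a,0) * cofactor M a 0)"
    by (rule laplace_expansion_column[OF MC]) simp
  also have "\<dots> = M $$ (0,0) * cofactor M 0 0"
    by (subst sum.lessThan_Suc_shift) (simp add: M_def)
  also have "\<dots> = det (mat_delete M 0 0)" by (simp add: M_def cofactor_def)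
  finally have detM2: "det M = det (mat_delete M 0 0)" .
  define W where "W = mat n n (\<lambda>(a,b). y (Suc b) ^ a)"
  define D :: "'a mat" where "D = mat n n (\<lambda>(a,b). if a = b then y (Suc b) - y 0 else 0)"
  have del: "mat_delete M 0 0 = W * D"
  proof (rule eq_matI)
    fix a b assume ab: "a < dim_row (W * D)" "b < dim_col (W * D)"
    hence ab': "a < n" "b < n" by (auto simp: W_def D_def)
    have "(W * D) $$ (a,b) = (\<Sum>c<n. y (Suc c) ^ a * (if c = b then y (Suc b) - y 0 else 0))"
      unfolding W_def D_def by (subst mult_mat_entry) (use ab' in auto)
    also have "\<dots> = (\<Sum>c<n. (if c = b then y (Suc b) ^ a * (y (Suc b) - y 0) else 0))"
      by (rule sum.cong) auto
    also have "\<dots> = y (Suc b) ^ a * (y (Suc b) - y 0)" using ab' by simp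
    finally show "mat_delete M 0 0 $$ (a,b) = (W * D) $$ (a,b)"
      using ab' by (simp add: mat_delete_def M_def)
  qed (auto simp: M_def W_def D_def mat_delete_def)
  have detD: "det D = (\<Prod>b<n. (y (Suc b) - y 0))" unfolding D_def by (subst det_tri) auto
  have "det (W * D) = det W * det D" by (rule det_mult) (auto simp: W_def D_def)
  then show ?thesis using detM detM2 del detD unfolding V_def W_def by (simp add: mult.commute)
qed

lemma vdm:
  fixes y :: "nat \<Rightarrow> 'a::comm_ring_1"
  shows "det (mat n n (\<lambda>(a,b). y b ^ a)) = (\<Prod>a<n. \<Prod>b\<in>{a+1..<n}. (y b - y a))"
proof (induction n arbitrary: y)
  case 0
  then show ?case by (simp add: det_dim_zero)
next
  case (Suc n)
  have sh: "(\<Prod>b\<in>{Suc a+1..<Suc n}. (y b - y (Suc a))) = (\<Prod>b\<in>{a+1..<n}. (y (Suc b) - y (Suc a)))" for a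
  proof -
    have "(\<Prod>b\<in>Suc ` {a+1..<n}. (y b - y (Suc a))) = (\<Prod>b\<in>{a+1..<n}. (y (Suc b) - y (Suc a)))"
      by (subst prod.reindex) auto
    moreover have "Suc ` {a+1..<n} = {Suc a+1..<Suc n}" by simp
    ultimately show ?thesis by simp
  qed
  have "(\<Prod>a<Suc n. \<Prod>b\<in>{a+1..<Suc n}. (y b - y a)) =
        (\<Prod>b\<in>{1..<Suc n}. (y b - y 0)) * (\<Prod>a<n. \<Prod>b\<in>{Suc a+1..<Suc n}. (y b - y (Suc a)))"
    by (subst prod.lessThan_Suc_shift) simp
  also have "(\<Prod>b\<in>{1..<Suc n}. (y b - y 0)) = (\<Prod>b<n. (y (Suc b) - y 0))"
  proof -
    show ?thesis using prod.atLeast1_atMost_eq[where g="\<lambda>b. y b - y 0" and n=n] by (simp add: atLeastLessThanSuc_atLeastAtMost)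
  qed
  finally show ?case using vdm_step[where y=y and n=n] Suc[of "\<lambda>b. y (Suc b)"] sh by simp
qed

definition esym_all :: "nat \<Rightarrow> nat \<Rightarrow> (nat \<Rightarrow> 'a::comm_ring_1) \<Rightarrow> 'a" where
  "esym_all r d x = (\<Sum>S\<in>{S. S \<subseteq> {1..r} \<and> card S = d}. \<Prod>i\<in>S. x i)"

lemma card0_sets: "finite F \<Longrightarrow> {S. S \<subseteq> F \<and> card S = 0} = {{}}"
  using finite_subset by fastforce

lemma esym_all_0: "esym_all r 0 x = 1"
  unfolding esym_all_def by (subst card0_sets) auto

lemma esym_omit_0: "esym_omit r j 0 x = 1"
  unfolding esym_omit_def by (subst card0_sets) auto

lemma esym_rec:
  assumes j: "j \<in> {1..r}"
  shows "esym_all r (Suc d) x = esym_omit r j (Suc d) x + x j * esym_omit r j d x"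
proof -
  define U where "U = {1..r} - {j}"
  have fU: "finite U" by (simp add: U_def)
  define P1 where "P1 = {S. S \<subseteq> U \<and> card S = Suc d}"
  define P0 where "P0 = {S. S \<subseteq> U \<and> card S = d}"
  have split: "{S. S \<subseteq> {1..r} \<and> card S = Suc d} = P1 \<union> insert j ` P0"
  proof (rule Set.set_eqI)
    fix S show "S \<in> {S. S \<subseteq> {1..r} \<and> card S = Suc d} \<longleftrightarrow> S \<in> P1 \<union> insert j ` P0"
    proof (rule iffI)
    assume S: "S \<in> {S. S \<subseteq> {1..r} \<and> card S = Suc d}"
    hence fS: "finite S" using finite_subset by blast
    show "S \<in> P1 \<union> insert j ` P0"
    proof (cases "j \<in> S")
      case True
      have "S = insert j (S - {j})" using True by blast
      moreover have "S - {j} \<in> P0" using S True fS by (auto simp: P0_def U_def)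
      ultimately show ?thesis by blast
    next
      case False then show ?thesis using S by (auto simp: P1_def U_def)
    qed
  next
    assume "S \<in> P1 \<union> insert j ` P0"
    then show "S \<in> {S. S \<subseteq> {1..r} \<and> card S = Suc d}"
    proof
      assume "S \<in> P1" then show ?thesis by (auto simp: P1_def U_def)
    next
      assume "S \<in> insert j ` P0"
      then obtain T where T: "T \<in> P0" "S = insert j T" by blast
      have "finite T" "j \<notin> T" using T fU finite_subset by (auto simp: P0_def U_def)
      then show ?thesis using T j by (auto simp: P0_def U_def)
    qed
  qed
  qed
  have fin1: "finite P1" unfolding P1_def using fU by (simp add: finite_Collect_subsets)
  have fin0: "finite P0" unfolding P0_def using fU by (simp add: finite_Collect_subsets)
  have disj: "P1 \<inter> insert j ` P0 = {}" by (auto simp: P1_def P0_def U_def)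
  have inj: "inj_on (insert j) P0"
  proof (rule inj_onI)
    fix A B assume AB: "A \<in> P0" "B \<in> P0" "insert j A = insert j B"
    moreover have "j \<notin> A" "j \<notin> B" using AB by (auto simp: P0_def U_def)
    ultimately show "A = B" by (metis Diff_insert_absorb)
  qed
  have "esym_all r (Suc d) x = (\<Sum>S\<in>P1. \<Prod>i\<in>S. x i) + (\<Sum>S\<in>insert j ` P0. \<Prod>i\<in>S. x i)"
    unfolding esym_all_def split by (rule sum.union_disjoint) (use fin1 fin0 disj in auto)
  also have "(\<Sum>S\<in>insert j ` P0. \<Prod>i\<in>S. x i) = (\<Sum>T\<in>P0. \<Prod>i\<in>insert j T. x i)"
    by (simp add: sum.reindex[OF inj])
  also have "\<dots> = (\<Sum>T\<in>P0. x j * (\<Prod>i\<in>T. x i))"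
  proof (rule sum.cong)
    fix T assume "T \<in> P0"
    hence "finite T" "j \<notin> T" using fU finite_subset by (auto simp: P0_def U_def)
    then show "(\<Prod>i\<in>insert j T. x i) = x j * (\<Prod>i\<in>T. x i)" by simp
  qed simp
  finally show ?thesis
    by (simp add: esym_omit_def P1_def P0_def U_def sum_distrib_left)
qed

lemma esym_closed:
  assumes j: "j \<in> {1..r}"
  shows "esym_omit r j d x = (\<Sum>m\<le>d. esym_all r (d-m) x * (- x j)^m)"
proof (induction d)
  case 0
  then show ?case by (simp add: esym_all_0 esym_omit_0)
next
  case (Suc d)
  have "esym_omit r j (Suc d) x = esym_all r (Suc d) x - x j * esym_omit r j d x"
    using esym_rec[OF j, of d x] by (simp add: algebra_simps)
  also have "\<dots> = esym_all r (Suc d) x + (\<Sum>m\<le>d. esym_all r (d-m) x * (- x j)^Suc m)"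
    by (simp add: Suc sum_distrib_left algebra_simps sum_negf)
  also have "\<dots> = (\<Sum>m\<le>Suc d. esym_all r (Suc d-m) x * (- x j)^m)"
    by (subst sum.atMost_Suc_shift) simp
  finally show ?case .
qed

theorem lemma2p2:
  fixes r s :: nat and i :: "nat \<Rightarrow> nat" and x :: "nat \<Rightarrow> 'a::comm_ring_1"
  assumes "r \<ge> 1" and "s \<le> r"
    and "strict_mono_on {1..s} i"
    and "\<forall>\<alpha>\<in>{1..s}. i \<alpha> \<in> {1..r}"
  shows "det (B_mat r s i x) = (\<Prod>\<alpha>\<in>{1..s}. \<Prod>\<beta>\<in>{\<alpha>+1..s}. (x (i \<alpha>) - x (i \<beta>)))"
proof -
  define y where "y = (\<lambda>b. - x (i (Suc b)))"
  define L :: "'a mat" where "L = mat s s (\<lambda>(d,m). if m \<le> d then esym_all r (d-m) x else 0)"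
  define V :: "'a mat" where "V = mat s s (\<lambda>(a,b). y b ^ a)"
  have iB: "i (Suc b) \<in> {1..r}" if "b < s" for b using assms(4) that by auto
  have eq: "B_mat r s i x = L * V"
  proof (rule eq_matI)
    fix d b assume db: "d < dim_row (L * V)" "b < dim_col (L * V)"
    hence db': "d < s" "b < s" by (auto simp: L_def V_def)
    have "(L * V) $$ (d,b) = (\<Sum>c<s. (if c \<le> d then esym_all r (d-c) x else 0) * y b ^ c)"
      unfolding L_def V_def by (subst mult_mat_entry) (use db' in auto)
    also have "\<dots> = (\<Sum>c\<in>{..<s}. if c \<in> {..d} then esym_all r (d-c) x * y b ^ c else 0)"
      by (rule sum.cong) auto
    also have "\<dots> = (\<Sum>c\<in>{..<s} \<inter> {..d}. esym_all r (d-c) x * y b ^ c)"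
      by (simp add: sum.inter_restrict)
    also have "{..<s} \<inter> {..d} = {..d}" using db' by auto
    also have "(\<Sum>c\<le>d. esym_all r (d-c) x * y b ^ c) = esym_omit r (i (Suc b)) d x"
      using esym_closed[OF iB[OF db'(2)], of d x] by (simp add: y_def)
    finally have 1: "(L * V) $$ (d,b) = esym_omit r (i (Suc b)) d x" .
    have lt: "i (Suc b) - Suc 0 < r" "Suc (i (Suc b) - Suc 0) = i (Suc b)" using iB[OF db'(2)] by auto
    have "B_mat r s i x $$ (d,b) = esym_omit r (i (Suc b)) d x"
      using db' lt by (simp add: B_mat_def A_mat_def)
    then show "B_mat r s i x $$ (d,b) = (L * V) $$ (d,b)" using 1 by simp
  qed (auto simp: B_mat_def L_def V_def)
  have "det (B_mat r s i x) = det L * det V"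
    unfolding eq by (rule det_mult) (auto simp: L_def V_def)
  also have "det L = 1" unfolding L_def by (subst det_tri) (auto simp: esym_all_0)
  also have "det V = (\<Prod>a<s. \<Prod>b\<in>{a+1..<s}. (y b - y a))" unfolding V_def by (rule vdm)
  also have "\<dots> = (\<Prod>a<s. \<Prod>b\<in>{a+1..<s}. (x (i (Suc a)) - x (i (Suc b))))"
    by (simp add: y_def)
  also have "\<dots> = (\<Prod>a<s. \<Prod>\<beta>\<in>{Suc a+1..s}. (x (i (Suc a)) - x (i \<beta>)))"
  proof (rule prod.cong[OF refl])
    fix a assume "a \<in> {..<s}"
    have "(\<Prod>b\<in>{a+1..<s}. (x (i (Suc a)) - x (i (Suc b)))) = (\<Prod>\<beta>\<in>Suc ` {a+1..<s}. (x (i (Suc a)) - x (i \<beta>)))"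
      by (subst prod.reindex) auto
    also have "Suc ` {a+1..<s} = {Suc a+1..s}" by (auto simp: image_iff)
    finally show "(\<Prod>b\<in>{a+1..<s}. (x (i (Suc a)) - x (i (Suc b)))) = (\<Prod>\<beta>\<in>{Suc a+1..s}. (x (i (Suc a)) - x (i \<beta>)))" .
  qed
  also have "\<dots> = (\<Prod>\<alpha>\<in>{1..s}. \<Prod>\<beta>\<in>{\<alpha>+1..s}. (x (i \<alpha>) - x (i \<beta>)))"
    using prod.atLeast1_atMost_eq[where g="\<lambda>\<alpha>. \<Prod>\<beta>\<in>{\<alpha>+1..s}. (x (i \<alpha>) - x (i \<beta>))" and n=s] by simp
  finally show ?thesis by simp
qed

end
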